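(* Consider the resilient constrained consensus algorithm described in the context, with at most $f$ Byzantine agents. Suppose $\bigcap_{i\in\mathcal H}\mathcal X_i=\{x^*\}$ and the set of normal agents $\mathcal H$ is $k$-redundant. Suppose $\mu>0$ is such that for every $x\in\mathbb R^m$ and every $\mathcal S\subseteq\mathcal H$ with $|\mathcal S|\ge n-k$, $$\max_{i\in\mathcal S}\mathrm{dist}(x,\mathcal X_i)\ge\mu\,\mathrm{dist}\Big(x,\bigcap_{i\in\mathcal S}\mathcal X_i\Big).$$ If $k>\frac{4f}{\mu^2}+(2f-1)$, then at every time $t$ $$\sum_{i\in\mathcal H}\phi_i(t)\ge\Big(\frac{\mu^2}{2}k-\frac{4f+2f\mu^2-\mu^2}{2}\Big)V(t).$$
   Context: Setting: There are $n$ agents $\mathcal N=\{1,\dots,n\}$ on a complete communication graph. A known integer $f\ge0$ is given. The agents are partitioned into normal agents $\mathcal H$ and Byzantine agents $\mathcal F$ with $|\mathcal F|\le f$. Each $i\in\mathcal H$ has a closed convex $\mathcal X_i\subseteq\mathbb R^m$. Each normal agent's state is constrained to lie in $\mathcal X_i$; in particular $x_i(0)\in\mathcal X_i$. Algorithm: normal agent $i$ has state $x_i(t)\in\mathbb R^m$ and at time $t$ receives $x_{ji}(t)$ from each $j\ne i$. If $j\in\mathcal H$, then $x_{ji}(t)=x_j(t)$. If $j\in\mathcal F$, the value is arbitrary and may differ per recipient. Agent $i$ discards the $f$ received vectors with largest $\|x_i(t)-x_{ji}(t)\|$, with ties broken arbitrarily. The remaining $n-f-1$ senders form $\mathcal M_i(t)$.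 The update is $$x_i(t+1)=\mathrm P_{\mathcal X_i}\Big[x_i(t)+\alpha\sum_{j\in\mathcal M_i(t)}(x_{ji}(t)-x_i(t))\Big],$$ with $\alpha>0$ and $\mathrm P_{\mathcal C}$ the Euclidean projection. Notation: - $\mathrm{dist}(x,\mathcal C)=\|x-\mathrm P_{\mathcal C}[x]\|$; - $\phi_i(t)=\big\langle x_i(t)-x^*,\sum_{j\in\mathcal M_i(t)}(x_i(t)-x_{ji}(t))\big\rangle$; - $V(t)=\sum_{i\in\mathcal H}\|x_i(t)-x^*\|^2$; - $\mathcal H$ is $k$-redundant if for every $\mathcal S\subseteq\mathcal H$ with $|\mathcal S|\ge n-k$ we have $\bigcap_{i\in\mathcal S}\mathcal X_i=\bigcap_{i\in\mathcal H}\mathcal X_i$. *)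

theory Defs
  imports "HOL-Analysis.Analysis"
begin

text \<open>Agents are indexed by {1..n}. Euclidean projection onto a closed convex set is
  the library's closest_point; the distance to a set is infdist.\<close>

definition proj :: "'a::euclidean_space set \<Rightarrow> 'a \<Rightarrow> 'a" where
  "proj C x = closest_point C x"

definition k_redundant :: "nat \<Rightarrow> nat set \<Rightarrow> (nat \<Rightarrow> 'a set) \<Rightarrow> nat \<Rightarrow> bool" where
  "k_redundant n H X k \<longleftrightarrow>
     (\<forall>S. S \<subseteq> H \<and> card S \<ge> n - k \<longrightarrow> (\<Inter>i\<in>S. X i) = (\<Inter>i\<in>H. X i))"

text \<open>M is a valid trimmed set for agent i: obtained from the senders N-{i} by discarding
  exactly f received vectors with largest distance to the own state (ties arbitrary).\<close>
definition trimmed_set ::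
  "nat \<Rightarrow> nat \<Rightarrow> nat \<Rightarrow> 'a::real_normed_vector \<Rightarrow> (nat \<Rightarrow> 'a) \<Rightarrow> nat set \<Rightarrow> bool" where
  "trimmed_set n f i xi recv M \<longleftrightarrow>
     M \<subseteq> {1..n} - {i} \<and> card (({1..n} - {i}) - M) = f \<and>
     (\<forall>j\<in>M. \<forall>j'\<in>({1..n} - {i}) - M. norm (xi - recv j) \<le> norm (xi - recv j'))"

definition phi :: "'a::real_inner \<Rightarrow> 'a \<Rightarrow> (nat \<Rightarrow> 'a) \<Rightarrow> nat set \<Rightarrow> real" where
  "phi xstar xi recv M = inner (xi - xstar) (\<Sum>j\<in>M. xi - recv j)"

definition Vfun :: "'a::real_inner \<Rightarrow> nat set \<Rightarrow> (nat \<Rightarrow> 'a) \<Rightarrow> real" where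
  "Vfun xstar H xs = (\<Sum>i\<in>H. (norm (xs i - xstar))^2)"

end

theory Submission
  imports Defs
begin

lemma agent_bound:
  fixes xs r :: "nat \<Rightarrow> 'a::euclidean_space" and Mi H :: "nat set"
    and n f k i :: nat and \<mu> :: real and xstar :: 'a
  assumes H_sub: "H \<subseteq> {1..n}" and F_card: "card ({1..n} - H) \<le> f" and iH: "i \<in> H"
    and r_normal: "\<forall>j\<in>H. j \<noteq> i \<longrightarrow> r j = xs j"
    and trim: "trimmed_set n f i (xs i) r Mi"
    and close: "xs i \<noteq> xstar \<Longrightarrow>
       real (card {j\<in>H. norm (xs i - xs j) < \<mu> * norm (xs i - xstar)}) \<le> real n - real k - 1"
    and mu_pos: "\<mu> > 0" and kn: "k < n"
  shows "phi xstar (xs i) r Mi - (\<Sum>j\<in>H. (norm (xs i - xstar))^2 / 2 - (norm (xs j - xstar))^2 / 2)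
     \<ge> (\<mu>^2 / 2 * (real k + 1 - 2 * real f) - 2 * real f) * (norm (xs i - xstar))^2"
proof -
  define e where "e j = xs j - xstar" for j
  define a where "a = norm (e i)"
  define R where "R = ({1..n} - {i}) - Mi"
  define g where "g j = a^2/2 - (norm (e j))^2/2" for j
  have Mi_sub: "Mi \<subseteq> {1..n} - {i}" and cardR: "card R = f"
    and dom: "\<forall>j\<in>Mi. \<forall>j'\<in>R. norm (xs i - r j) \<le> norm (xs i - r j')"
    using trim unfolding trimmed_set_def R_def by auto
  have finMi: "finite Mi" using Mi_sub finite_subset by blast
  have finR: "finite R" unfolding R_def by auto
  have finH: "finite H" using H_sub finite_subset by blast
  have iR: "i \<notin> R" unfolding R_def by auto
  have iMi: "i \<notin> Mi" using Mi_sub by auto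
  have a0: "a \<ge> 0" unfolding a_def by simp
  have eq_e: "xs i - xs j = e i - e j" for j unfolding e_def by simp
  have phi_split: "phi xstar (xs i) r Mi = (\<Sum>j\<in>Mi\<inter>H. inner (e i) (e i - e j))
      + (\<Sum>j\<in>Mi-H. inner (e i) (xs i - r j))"
  proof -
    have "phi xstar (xs i) r Mi = (\<Sum>j\<in>Mi. inner (e i) (xs i - r j))"
      unfolding phi_def e_def by (simp add: inner_sum_right)
    also have "\<dots> = (\<Sum>j\<in>Mi\<inter>H. inner (e i) (xs i - r j)) + (\<Sum>j\<in>Mi-H. inner (e i) (xs i - r j))"
      using finMi by (rule sum.Int_Diff)
    also have "(\<Sum>j\<in>Mi\<inter>H. inner (e i) (xs i - r j)) = (\<Sum>j\<in>Mi\<inter>H. inner (e i) (e i - e j))"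
    proof (rule sum.cong)
      fix j assume "j \<in> Mi \<inter> H"
      then have "r j = xs j" using r_normal iMi by auto
      then show "inner (e i) (xs i - r j) = inner (e i) (e i - e j)" using eq_e by simp
    qed simp
    finally show ?thesis .
  qed
  have inner_id: "inner (e i) (e i - e j) = (norm (e i - e j))^2/2 + g j" for j
    unfolding g_def a_def
    apply (simp add: power2_norm_eq_inner inner_diff_left inner_diff_right inner_commute)
    by (simp add: field_simps)
  have P_eq: "(\<Sum>j\<in>H. (norm (xs i - xstar))^2 / 2 - (norm (xs j - xstar))^2 / 2) = (\<Sum>j\<in>H. g j)"
    unfolding g_def a_def e_def by simp
  have HmM: "H - Mi = insert i (R \<inter> H)" using H_sub iH iMi unfolding R_def by auto
  have P_split: "(\<Sum>j\<in>H. g j) = (\<Sum>j\<in>Mi\<inter>H. g j) + (\<Sum>j\<in>R\<inter>H. g j)"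
  proof -
    have "(\<Sum>j\<in>H. g j) = (\<Sum>j\<in>H\<inter>Mi. g j) + (\<Sum>j\<in>H-Mi. g j)"
      using finH by (rule sum.Int_Diff)
    also have "(\<Sum>j\<in>H-Mi. g j) = g i + (\<Sum>j\<in>R\<inter>H. g j)"
      unfolding HmM using finR iR by (simp add: sum.insert)
    finally show ?thesis by (simp add: g_def a_def Int_commute)
  qed
  define S1 where "S1 = (\<Sum>j\<in>Mi\<inter>H. (norm (e i - e j))^2/2)"
  define Byz where "Byz = (\<Sum>j\<in>Mi-H. inner (e i) (xs i - r j))"
  have main_eq: "phi xstar (xs i) r Mi - (\<Sum>j\<in>H. g j) = S1 - (\<Sum>j\<in>R\<inter>H. g j) + Byz"
    unfolding phi_split P_split S1_def Byz_def inner_id by (simp add: sum.distrib)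
  have far: "S1 \<ge> \<mu>^2/2 * (real k + 1 - 2 * real f) * a^2"
  proof (cases "a = 0")
    case True
    have "S1 \<ge> 0" unfolding S1_def by (rule sum_nonneg) simp
    then show ?thesis using True by simp
  next
    case False
    then have apos: "a > 0" using a0 by simp
    then have "xs i \<noteq> xstar" unfolding a_def e_def by auto
    define Cl where "Cl = {j\<in>H. norm (xs i - xs j) < \<mu> * a}"
    define Far where "Far = {j\<in>H. \<mu> * a \<le> norm (xs i - xs j)}"
    have cCl: "real (card Cl) \<le> real n - real k - 1"
      using close[OF \<open>xs i \<noteq> xstar\<close>] unfolding Cl_def a_def e_def by simp
    have FarEq: "Far = H - Cl" unfolding Far_def Cl_def by auto
    have cH: "card ({1..n} - H) = n - card H" using H_sub by (simp add: card_Diff_subset finH)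
    have cHle: "card H \<le> n" using H_sub card_mono[of "{1..n}" H] by simp
    have cH2: "real (card H) \<ge> real n - real f" using cH F_card cHle by linarith
    have cFar: "real (card Far) = real (card H) - real (card Cl)"
      unfolding FarEq using finH by (subst card_Diff_subset) (auto simp: Cl_def of_nat_diff card_mono)
    have iFar: "i \<notin> Far" using apos mu_pos unfolding Far_def by (simp add: not_le)
    have FmM: "Far - Mi \<subseteq> R" using iFar H_sub unfolding Far_def R_def by auto
    have finFar: "finite Far" using finH unfolding Far_def by simp
    have "card (Far - Mi) \<le> f" using card_mono[OF finR FmM] cardR by simp
    moreover have "card Far = card (Far \<inter> Mi) + card (Far - Mi)"
      using finFar by (metis card_Int_Diff)
    ultimately have cFM: "real (card (Far \<inter> Mi)) \<ge> real k + 1 - 2 * real f"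
      using cFar cCl cH2 by linarith
    have "S1 \<ge> (\<Sum>j\<in>Far\<inter>Mi. (norm (e i - e j))^2/2)"
      unfolding S1_def by (rule sum_mono2) (auto simp: finMi Far_def)
    moreover have "(\<Sum>j\<in>Far\<inter>Mi. (norm (e i - e j))^2/2) \<ge> (\<Sum>j\<in>Far\<inter>Mi. \<mu>^2 * a^2/2)"
    proof (rule sum_mono)
      fix j assume "j \<in> Far \<inter> Mi"
      then have "\<mu> * a \<le> norm (e i - e j)" unfolding Far_def using eq_e by auto
      then have "(\<mu> * a)^2 \<le> (norm (e i - e j))^2"
        using mu_pos a0 by (intro power_mono) auto
      then show "\<mu>^2 * a^2/2 \<le> (norm (e i - e j))^2/2" by (simp add: power_mult_distrib)
    qed
    moreover have "(\<Sum>j\<in>Far\<inter>Mi. \<mu>^2 * a^2/2) = real (card (Far \<inter> Mi)) * (\<mu>^2 * a^2/2)"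
      by simp
    moreover have "real (card (Far \<inter> Mi)) * (\<mu>^2 * a^2/2) \<ge> (real k + 1 - 2 * real f) * (\<mu>^2 * a^2/2)"
      using cFM by (intro mult_right_mono) auto
    ultimately show ?thesis by (simp add: algebra_simps)
  qed
  have byz: "Byz - (\<Sum>j\<in>R\<inter>H. g j) \<ge> - 2 * real f * a^2"
  proof -
    define s where "s = card (R \<inter> H)"
    define b where "b = card (Mi - H)"
    have sf: "s \<le> f" unfolding s_def using card_mono[OF finR, of "R \<inter> H"] cardR by auto
    have bs: "b \<le> s"
    proof -
      have d: "(Mi - H) \<inter> (R - H) = {}" unfolding R_def by auto
      have sub: "(Mi - H) \<union> (R - H) \<subseteq> {1..n} - H" using Mi_sub unfolding R_def by auto
      have "card (Mi - H) + card (R - H) = card ((Mi - H) \<union> (R - H))"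
        using d finMi finR by (simp add: card_Un_disjoint)
      also have "\<dots> \<le> card ({1..n} - H)" by (rule card_mono[OF _ sub]) simp
      finally have "card (Mi - H) + card (R - H) \<le> f" using F_card by simp
      moreover have "card R = card (R \<inter> H) + card (R - H)"
        using finR by (metis card_Int_Diff)
      ultimately show ?thesis unfolding b_def s_def using cardR by simp
    qed
    show ?thesis
    proof (cases "b = 0")
      case True
      then have "Mi - H = {}" unfolding b_def using finMi by simp
      then have B0: "Byz = 0" unfolding Byz_def by (metis sum.empty)
      have "(\<Sum>j\<in>R\<inter>H. g j) \<le> (\<Sum>j\<in>R\<inter>H. a^2/2)"
        by (rule sum_mono) (simp add: g_def)
      also have "\<dots> = real s * (a^2/2)" unfolding s_def by simp
      finally have "(\<Sum>j\<in>R\<inter>H. g j) \<le> real s * (a^2/2)" .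
      moreover have "real s * a^2 \<le> real f * a^2" using sf by (intro mult_right_mono) auto
      moreover have "0 \<le> real s * a^2" by simp
      ultimately show ?thesis using B0 by linarith
    next
      case False
      then have "s > 0" using bs by simp
      then have ne: "R \<inter> H \<noteq> {}" unfolding s_def by auto
      have finRH: "finite (R \<inter> H)" using finR by simp
      define m where "m = Min ((\<lambda>j. norm (e j)) ` (R \<inter> H))"
      obtain j0 where j0: "j0 \<in> R \<inter> H" "m = norm (e j0)"
      proof -
        have "m \<in> (\<lambda>j. norm (e j)) ` (R \<inter> H)"
          unfolding m_def using finRH ne by (intro Min_in) auto
        then show ?thesis using that by blast
      qed
      have mle: "m \<le> norm (e j)" if "j \<in> R \<inter> H" for j
        unfolding m_def using finRH that by (intro Min_le) auto
      have m0: "m \<ge> 0" using j0 by simp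
      have "(\<Sum>j\<in>R\<inter>H. g j) \<le> (\<Sum>j\<in>R\<inter>H. a^2/2 - m^2/2)"
      proof (rule sum_mono)
        fix j assume "j \<in> R \<inter> H"
        then have "m^2 \<le> (norm (e j))^2" using mle m0 by (intro power_mono) auto
        then show "g j \<le> a^2/2 - m^2/2" unfolding g_def by simp
      qed
      also have "\<dots> = real s * (a^2/2 - m^2/2)" unfolding s_def by simp
      finally have G: "(\<Sum>j\<in>R\<inter>H. g j) \<le> real s * (a^2/2 - m^2/2)" .
      have "Byz \<ge> (\<Sum>j\<in>Mi-H. - (a * (a + m)))"
        unfolding Byz_def
      proof (rule sum_mono)
        fix j assume jM: "j \<in> Mi - H"
        have j0ne: "j0 \<noteq> i" using j0 iR by auto
        have "norm (xs i - r j) \<le> norm (xs i - r j0)" using dom jM j0 by auto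
        also have "\<dots> = norm (e i - e j0)" using r_normal j0 j0ne eq_e by auto
        also have "\<dots> \<le> a + m" unfolding a_def j0(2) by (rule norm_triangle_ineq4)
        finally have nr: "norm (xs i - r j) \<le> a + m" .
        have "\<bar>inner (e i) (xs i - r j)\<bar> \<le> a * norm (xs i - r j)"
          unfolding a_def by (rule Cauchy_Schwarz_ineq2)
        also have "\<dots> \<le> a * (a + m)" using nr a0 by (rule mult_left_mono)
        finally show "- (a * (a + m)) \<le> inner (e i) (xs i - r j)" by linarith
      qed
      also have "(\<Sum>j\<in>Mi-H. - (a * (a + m))) = - (real b * (a * (a + m)))" unfolding b_def by simp
      finally have B: "Byz \<ge> - (real b * (a * (a + m)))" .
      have "0 \<le> (a - m)^2" by simp
      then have "2 * (a * m) \<le> a^2 + m^2" by (simp add: power2_diff)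
      then have am: "a * m \<le> a^2/2 + m^2/2" by linarith
      have h1: "real b * (a * m) \<le> real b * (a^2/2 + m^2/2)" using am by (intro mult_left_mono) auto
      have h2: "real b * m^2 \<le> real s * m^2" using bs by (intro mult_right_mono) auto
      have h3: "real b * a^2 \<le> real s * a^2" using bs by (intro mult_right_mono) auto
      have h4: "real s * a^2 \<le> real f * a^2" using sf by (intro mult_right_mono) auto
      have h5: "0 \<le> real s * a^2" by simp
      show ?thesis using G B h1 h2 h3 h4 h5 by (simp add: algebra_simps power2_eq_square)
    qed
  qed
  have "phi xstar (xs i) r Mi - (\<Sum>j\<in>H. g j) \<ge> (\<mu>^2 / 2 * (real k + 1 - 2 * real f) - 2 * real f) * a^2"
  proof -
    have "(\<mu>^2 / 2 * (real k + 1 - 2 * real f) - 2 * real f) * a^2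
        = \<mu>^2/2 * (real k + 1 - 2 * real f) * a^2 + (- 2 * real f * a^2)" by (simp add: algebra_simps)
    then show ?thesis using main_eq far byz by linarith
  qed
  then show ?thesis unfolding P_eq by (simp add: a_def e_def)
qed

theorem lemma3:
  fixes n f k :: nat
    and H :: "nat set"
    and X :: "nat \<Rightarrow> 'a::euclidean_space set"
    and x :: "nat \<Rightarrow> nat \<Rightarrow> 'a"
    and recv :: "nat \<Rightarrow> nat \<Rightarrow> nat \<Rightarrow> 'a"
    and M :: "nat \<Rightarrow> nat \<Rightarrow> nat set"
    and \<alpha> \<mu> :: real
    and xstar :: 'a
  assumes H_sub: "H \<subseteq> {1..n}"
    and F_card: "card ({1..n} - H) \<le> f"
    and X_closed: "\<forall>i\<in>H. closed (X i)"
    and X_convex: "\<forall>i\<in>H. convex (X i)"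
    and init: "\<forall>i\<in>H. x 0 i \<in> X i"
    and alpha_pos: "\<alpha> > 0"
    and recv_normal: "\<forall>t. \<forall>i\<in>H. \<forall>j\<in>H. j \<noteq> i \<longrightarrow> recv t j i = x t j"
    and trim: "\<forall>t. \<forall>i\<in>H. trimmed_set n f i (x t i) (\<lambda>j. recv t j i) (M t i)"
    and update: "\<forall>t. \<forall>i\<in>H.
        x (Suc t) i = proj (X i) (x t i + \<alpha> *\<^sub>R (\<Sum>j\<in>M t i. recv t j i - x t i))"
    and unique: "(\<Inter>i\<in>H. X i) = {xstar}"
    and redundant: "k_redundant n H X k"
    and mu_pos: "\<mu> > 0"
    and mu_bound: "\<forall>(y::'a) S. S \<subseteq> H \<and> card S \<ge> n - k \<longrightarrow>
        (MAX i\<in>S. infdist y (X i)) \<ge> \<mu> * infdist y (\<Inter>i\<in>S. X i)"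
    and k_large: "real k > 4 * real f / \<mu>^2 + (2 * real f - 1)"
  shows "\<forall>t. (\<Sum>i\<in>H. phi xstar (x t i) (\<lambda>j. recv t j i) (M t i))
          \<ge> (\<mu>^2 / 2 * real k - (4 * real f + 2 * real f * \<mu>^2 - \<mu>^2) / 2)
             * Vfun xstar H (x t)"
  proof -
  have xstar_in: "\<forall>i\<in>H. xstar \<in> X i" using unique by auto
  have states: "\<forall>i\<in>H. x t i \<in> X i" for t
  proof (induction t)
    case 0 then show ?case using init by simp
  next
    case (Suc t)
    show ?case
    proof
      fix i assume iH: "i \<in> H"
      have "X i \<noteq> {}" using xstar_in iH by auto
      then show "x (Suc t) i \<in> X i"
        using update iH X_closed by (simp add: proj_def closest_point_in_set)
    qed
  qed
  have kn: "k < n"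
  proof (rule ccontr)
    assume "\<not> k < n"
    then have "(\<Inter>i\<in>{}. X i) = (\<Inter>i\<in>H. X i)"
      using redundant[unfolded k_redundant_def, rule_format, of "{}"] by simp
    then have U: "(UNIV :: 'a set) = {xstar}" using unique by simp
    obtain b :: 'a where b: "b \<in> Basis" using nonempty_Basis by blast
    then have "b \<noteq> 0" by (rule nonzero_Basis)
    moreover have "xstar + b = xstar" using U by (metis UNIV_I singletonD)
    ultimately show False by simp
  qed
  have close: "real (card {j\<in>H. norm (x t i - x t j) < \<mu> * norm (x t i - xstar)}) \<le> real n - real k - 1"
    if iH: "i \<in> H" and ne: "x t i \<noteq> xstar" for t i
  proof (rule ccontr)
    define C where "C = {j\<in>H. norm (x t i - x t j) < \<mu> * norm (x t i - xstar)}"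
    assume "\<not> ?thesis"
    then have cC: "card C \<ge> n - k" unfolding C_def using kn by linarith
    have CH: "C \<subseteq> H" unfolding C_def by auto
    have finH: "finite H" using H_sub finite_subset by blast
    have finC: "finite C" using finH CH finite_subset by blast
    have Cne: "C \<noteq> {}" using cC kn by auto
    have inter: "(\<Inter>l\<in>C. X l) = {xstar}"
      using redundant[unfolded k_redundant_def, rule_format, of C] CH cC unique by simp
    have "(MAX l\<in>C. infdist (x t i) (X l)) \<ge> \<mu> * infdist (x t i) (\<Inter>l\<in>C. X l)"
      using mu_bound[rule_format, OF conjI[OF CH cC]] .
    then have ge: "(MAX l\<in>C. infdist (x t i) (X l)) \<ge> \<mu> * norm (x t i - xstar)"
      unfolding inter by (simp add: dist_norm)
    have "(MAX l\<in>C. infdist (x t i) (X l)) < \<mu> * norm (x t i - xstar)"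
    proof -
      have "\<forall>l\<in>C. infdist (x t i) (X l) < \<mu> * norm (x t i - xstar)"
      proof
        fix l assume lC: "l \<in> C"
        have "infdist (x t i) (X l) \<le> dist (x t i) (x t l)"
          using states[of t] lC CH by (intro infdist_le) auto
        also have "\<dots> < \<mu> * norm (x t i - xstar)" using lC unfolding C_def by (simp add: dist_norm)
        finally show "infdist (x t i) (X l) < \<mu> * norm (x t i - xstar)" .
      qed
      then show ?thesis using finC Cne by simp
    qed
    then show False using ge by linarith
  qed
  show ?thesis
  proof
    fix t
    define P where "P i = (\<Sum>j\<in>H. (norm (x t i - xstar))^2 / 2 - (norm (x t j - xstar))^2 / 2)" for i
    define c where "c = \<mu>^2 / 2 * (real k + 1 - 2 * real f) - 2 * real f"
    have each: "phi xstar (x t i) (\<lambda>j. recv t j i) (M t i) - P i \<ge> c * (norm (x t i - xstar))^2"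
      if iH: "i \<in> H" for i
      unfolding P_def c_def
    proof (rule agent_bound[OF H_sub F_card iH _ _ _ mu_pos kn])
      show "\<forall>j\<in>H. j \<noteq> i \<longrightarrow> recv t j i = x t j" using recv_normal iH by auto
      show "trimmed_set n f i (x t i) (\<lambda>j. recv t j i) (M t i)" using trim iH by auto
      show "x t i \<noteq> xstar \<Longrightarrow> real (card {j\<in>H. norm (x t i - x t j) < \<mu> * norm (x t i - xstar)}) \<le> real n - real k - 1"
        using close iH by auto
    qed
    have finH: "finite H" using H_sub finite_subset by blast
    have P0: "(\<Sum>i\<in>H. P i) = 0"
    proof -
      have "(\<Sum>i\<in>H. P i) = (\<Sum>i\<in>H. \<Sum>j\<in>H. (norm (x t i - xstar))^2 / 2) - (\<Sum>i\<in>H. \<Sum>j\<in>H. (norm (x t j - xstar))^2 / 2)"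
        unfolding P_def by (simp add: sum_subtractf)
      also have "(\<Sum>i\<in>H. \<Sum>j\<in>H. (norm (x t j - xstar))^2 / 2) = (\<Sum>i\<in>H. \<Sum>j\<in>H. (norm (x t i - xstar))^2 / 2)"
        by (rule sum.swap)
      finally show ?thesis by simp
    qed
    have "(\<Sum>i\<in>H. phi xstar (x t i) (\<lambda>j. recv t j i) (M t i) - P i) \<ge> (\<Sum>i\<in>H. c * (norm (x t i - xstar))^2)"
      using each by (intro sum_mono) auto
    then have "(\<Sum>i\<in>H. phi xstar (x t i) (\<lambda>j. recv t j i) (M t i)) \<ge> c * Vfun xstar H (x t)"
      using P0 by (simp add: sum_subtractf Vfun_def sum_distrib_left)
    moreover have "c = \<mu>^2 / 2 * real k - (4 * real f + 2 * real f * \<mu>^2 - \<mu>^2) / 2"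
      unfolding c_def by (simp add: field_simps)
    ultimately show "(\<Sum>i\<in>H. phi xstar (x t i) (\<lambda>j. recv t j i) (M t i))
          \<ge> (\<mu>^2 / 2 * real k - (4 * real f + 2 * real f * \<mu>^2 - \<mu>^2) / 2)
             * Vfun xstar H (x t)" by simp
  qed
qed

end
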